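(* Let $n\ge 3$. For $3\le i\le n$ let $R_i=\{(1\,2)(k\,i)\mid 1\le k<i\}\cup\{e\}\subseteq A_i\subseteq A_n$. Then every $v\in A_n$ can be written as $v=v_3v_4\cdots v_n$ with $v_i\in R_i$ for each $3\le i\le n$, and these elements $v_3,\dots,v_n$ are uniquely determined by $v$.
   Context: $S_n$ is the symmetric group on $[n]=\{1,\dots,n\}$, $A_n$ the alternating group (even permutations), and $e$ the identity. For $m\le n$, $S_m$ (and $A_m$) is regarded as the subgroup of $S_n$ fixing $m+1,\dots,n$. Products are compositions of permutations, with the rightmost factor applied first; $(k\,i)$ denotes a transposition, and $(1\,2)(1\,i)$, $(1\,2)(2\,i)$ are 3-cycles. *)

theory Defs
  imports "HOL-Combinatorics.Combinatorics"
begin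

text \<open>Permutations of [n] = {1..n} are functions nat => nat that permute {1..n}
  (fixing everything else). Composition is (o), rightmost factor applied first.\<close>

definition alt_grp :: "nat \<Rightarrow> (nat \<Rightarrow> nat) set" where
  "alt_grp n = {p. p permutes {1..n} \<and> evenperm p}"

definition R_set :: "nat \<Rightarrow> (nat \<Rightarrow> nat) set" where
  "R_set i = {transpose 1 2 \<circ> transpose k i | k. 1 \<le> k \<and> k < i} \<union> {id}"

definition ord_prod :: "(nat \<Rightarrow> nat \<Rightarrow> nat) \<Rightarrow> nat \<Rightarrow> nat \<Rightarrow> (nat \<Rightarrow> nat)" where
  "ord_prod vs a b = foldr (\<circ>) (map vs [a..<Suc b]) id"

end

theory Submission
  imports Defs
begin

lemma foldr_comp_gen: "foldr (\<circ>) xs g = foldr (\<circ>) xs id \<circ> (g :: nat \<Rightarrow> nat)"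
  by (induction xs) (auto simp: comp_assoc)

lemma ord_prod_Suc:
  assumes "m \<ge> 2"
  shows "ord_prod vs 3 (Suc m) = ord_prod vs 3 m \<circ> vs (Suc m)"
proof -
  have "[3..<Suc (Suc m)] = [3..<Suc m] @ [Suc m]" using assms by simp
  then show ?thesis unfolding ord_prod_def
    by (simp add: foldr_comp_gen[of _ "vs (Suc m)"])
qed

lemma ord_prod_cong:
  assumes "\<forall>i\<in>{3..m}. vs i = ws i"
  shows "ord_prod vs 3 m = ord_prod ws 3 m"
proof -
  have h: "map vs [3..<Suc m] = map ws [3..<Suc m]" using assms by auto
  show ?thesis unfolding ord_prod_def by (simp only: h)
qed

lemma ord_prod_two: "ord_prod vs 3 2 = id"
  unfolding ord_prod_def by simp

lemma R_permutes:
  assumes "r \<in> R_set i" "i \<ge> 3"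
  shows "r permutes {1..i}"
  using assms unfolding R_set_def
  by (auto intro!: permutes_compose permutes_swap_id permutes_id)

lemma R_permutation:
  assumes "r \<in> R_set i"
  shows "permutation r"
  using assms unfolding R_set_def
  by (auto intro!: permutation_compose permutation_swap_id permutation_id)

lemma R_key:
  assumes "r \<in> R_set i" "i \<ge> 3" "r a = i"
  shows "r = (if a = i then id else transpose 1 2 \<circ> transpose a i)"
proof -
  consider "r = id" | k where "1 \<le> k" "k < i" "r = transpose 1 2 \<circ> transpose k i"
    using assms(1) unfolding R_set_def by blast
  then show ?thesis
  proof cases
    case 1 then show ?thesis using assms by simp
  next
    case 2
    have "transpose k i a = transpose 1 2 i"
      using assms(3) 2(3) by (metis comp_apply transpose_involutory)
    also have "\<dots> = i" using assms(2) by simp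
    finally have "a = k" using 2 by (auto simp: transpose_def split: if_splits)
    then show ?thesis using 2 by simp
  qed
qed

lemma ord_prod_permutes:
  assumes "m \<ge> 2" "\<forall>i\<in>{3..m}. vs i \<in> R_set i"
  shows "ord_prod vs 3 m permutes {1..m}"
  using assms
proof (induction m rule: dec_induct)
  case base show ?case using permutes_id by (simp only: ord_prod_two)
next
  case (step m)
  have "ord_prod vs 3 m permutes {1..Suc m}"
    using step by (auto intro: permutes_subset)
  moreover have "vs (Suc m) permutes {1..Suc m}"
    using step R_permutes[of "vs (Suc m)" "Suc m"] by auto
  ultimately show ?case using ord_prod_Suc[OF step(1), of vs]
    by (metis permutes_compose)
qed

lemma uniq:
  assumes "m \<ge> 2"
  shows "\<forall>vs ws. (\<forall>i\<in>{3..m}. vs i \<in> R_set i) \<and> (\<forall>i\<in>{3..m}. ws i \<in> R_set i)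
     \<and> ord_prod vs 3 m = ord_prod ws 3 m \<longrightarrow> (\<forall>i\<in>{3..m}. vs i = ws i)"
  using assms
proof (induction m rule: dec_induct)
  case base then show ?case by simp
next
  case (step m)
  show ?case
  proof (intro allI impI)
    fix vs ws
    assume H: "(\<forall>i\<in>{3..Suc m}. vs i \<in> R_set i) \<and> (\<forall>i\<in>{3..Suc m}. ws i \<in> R_set i)
     \<and> ord_prod vs 3 (Suc m) = ord_prod ws 3 (Suc m)"
    define P where "P = ord_prod vs 3 m"
    define Q where "Q = ord_prod ws 3 m"
    define r where "r = vs (Suc m)"
    define s where "s = ws (Suc m)"
    have rR: "r \<in> R_set (Suc m)" and sR: "s \<in> R_set (Suc m)"
      using H step(1) unfolding r_def s_def by auto
    have Pp: "P permutes {1..m}" unfolding P_def using H step(1)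
      by (intro ord_prod_permutes) auto
    have Qp: "Q permutes {1..m}" unfolding Q_def using H step(1)
      by (intro ord_prod_permutes) auto
    have eq: "P \<circ> r = Q \<circ> s"
    proof -
      have "ord_prod vs 3 (Suc m) = ord_prod ws 3 (Suc m)" using H by blast
      then show ?thesis unfolding P_def Q_def r_def s_def by (simp only: ord_prod_Suc[OF step(1)])
    qed
    have "r permutes {1..Suc m}" using rR step(1) by (intro R_permutes) auto
    then have "bij r" by (rule permutes_bij)
    then obtain a where "Suc m = r a" by (rule bij_pointE)
    then have ra: "r a = Suc m" by simp
    have Pfix: "P (Suc m) = Suc m" by (rule permutes_not_in[OF Pp]) simp
    have e1: "P (r a) = Q (s a)" using fun_cong[OF eq, of a] by (simp only: comp_apply)
    have "Q (s a) = Suc m" using e1 Pfix unfolding ra by (metis)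
    then have sa: "s a = Suc m"
    proof (cases "s a \<in> {1..m}")
      case True
      then have "Q (s a) \<in> {1..m}" by (simp only: permutes_in_image[OF Qp])
      then have "Suc m \<in> {1..m}" unfolding \<open>Q (s a) = Suc m\<close> .
      then show ?thesis by simp
    next
      case False
      have "Q (s a) = s a" using False by (rule permutes_not_in[OF Qp])
      then show ?thesis using \<open>Q (s a) = Suc m\<close> by (rule subst)
    qed
    have i3': "3 \<le> Suc m" using step(1) by simp
    have rs: "r = s"
      using R_key[OF rR i3' ra] R_key[OF sR i3' sa] by (simp only:)
    have "P = Q"
    proof
      fix y
      obtain x where "y = r x" using \<open>bij r\<close> by (rule bij_pointE)
      moreover have "P (r x) = Q (s x)" using fun_cong[OF eq, of x] by (simp only: comp_apply)
      ultimately show "P y = Q y" using rs by (simp only:)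
    qed
    then have PQ: "ord_prod vs 3 m = ord_prod ws 3 m" unfolding P_def Q_def .
    have sub: "{3..m} \<subseteq> {3..Suc m}" by auto
    have A: "\<forall>i\<in>{3..m}. vs i \<in> R_set i" using H sub by blast
    have B: "\<forall>i\<in>{3..m}. ws i \<in> R_set i" using H sub by blast
    have "\<forall>i\<in>{3..m}. vs i = ws i" using step(3)[rule_format, OF conjI[OF A conjI[OF B PQ]]] by blast
    then show "\<forall>i\<in>{3..Suc m}. vs i = ws i"
    proof (intro ballI)
      fix i assume "i \<in> {3..Suc m}"
      then have "i \<in> {3..m} \<or> i = Suc m" by auto
      then show "vs i = ws i"
      proof
        assume "i \<in> {3..m}" then show ?thesis using \<open>\<forall>i\<in>{3..m}. vs i = ws i\<close> by blast
      next
        assume "i = Suc m" then show ?thesis using rs unfolding r_def s_def by (simp only:)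
      qed
    qed
  qed
qed

lemma alt_two:
  assumes "v permutes {1..2::nat}" "evenperm v"
  shows "v = id"
proof (rule ccontr)
  assume ne: "v \<noteq> id"
  have "v 1 \<in> {1..2}" using assms(1) permutes_in_image by fastforce
  moreover have "v 2 \<in> {1..2}" using assms(1) permutes_in_image by fastforce
  moreover have inj: "inj v" using assms(1) permutes_inj by blast
  moreover have "v 1 \<noteq> v 2" by (simp add: inj_eq[OF inj])
  moreover have "v 1 = 1 \<or> v 1 = 2" using \<open>v 1 \<in> {1..2}\<close> by auto
  moreover have "v 2 = 1 \<or> v 2 = 2" using \<open>v 2 \<in> {1..2}\<close> by auto
  ultimately consider "v 1 = 1" "v 2 = 2" | "v 1 = 2" "v 2 = 1"
    by fastforce
  then show False
  proof cases
    case 1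
    have "v = id"
    proof
      fix x show "v x = id x"
      proof -
        have "x = 1 \<or> x = 2 \<or> x \<notin> {1..2}" by auto
        then show ?thesis using 1 permutes_not_in[OF assms(1)] by auto
      qed
    qed
    then show False using ne by simp
  next
    case 2
    have "v = transpose 1 2"
    proof
      fix x show "v x = transpose 1 2 x"
      proof -
        have "x = 1 \<or> x = 2 \<or> x \<notin> {1..2}" by auto
        then show ?thesis using 2 permutes_not_in[OF assms(1)] by auto
      qed
    qed
    then show False using assms(2) by (simp add: evenperm_swap)
  qed
qed

lemma exist:
  assumes "m \<ge> 2"
  shows "\<forall>v. v permutes {1..m} \<and> evenperm v \<longrightarrow>
     (\<exists>vs. (\<forall>i\<in>{3..m}. vs i \<in> R_set i) \<and> v = ord_prod vs 3 m)"
  using assms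
proof (induction m rule: dec_induct)
  case base
  show ?case
  proof (intro allI impI)
    fix v :: "nat \<Rightarrow> nat" assume "v permutes {1..2} \<and> evenperm v"
    then have "v = id" using alt_two by blast
    then have "v = ord_prod (\<lambda>_. id) 3 2" by (simp only: ord_prod_two)
    then show "\<exists>vs. (\<forall>i\<in>{3..2}. vs i \<in> R_set i) \<and> v = ord_prod vs 3 2" by auto
  qed
next
  case (step m)
  show ?case
  proof (intro allI impI)
    fix v assume H: "v permutes {1..Suc m} \<and> evenperm v"
    define i where "i = Suc m"
    have i3: "i \<ge> 3" using step(1) unfolding i_def by simp
    have vp: "v permutes {1..i}" using H unfolding i_def by simp
    have "i \<in> {1..i}" using i3 by simp
    then obtain a where a: "a \<in> {1..i}" "v a = i"
      using permutes_image[OF vp] by (metis imageE)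
    define r where "r = (if a = i then id else transpose 1 2 \<circ> transpose a i)"
    define r' where "r' = (if a = i then id else transpose a i \<circ> transpose (1::nat) 2)"
    have rR: "r \<in> R_set i" unfolding r_def R_set_def using a by auto
    have rr: "r' \<circ> r = id" unfolding r_def r'_def
      by (simp add: fun_eq_iff)
    have r'p: "r' permutes {1..i}" unfolding r'_def using a i3
      by (auto intro!: permutes_compose permutes_swap_id permutes_id)
    have r'e: "evenperm r'" unfolding r'_def
      by (auto simp: evenperm_comp permutation_swap_id evenperm_swap)
    define w where "w = v \<circ> r'"
    have wi: "w i = i" unfolding w_def r'_def using a i3 by auto
    have wp0: "w permutes {1..i}" unfolding w_def using vp r'p permutes_compose by blast
    have wp: "w permutes {1..m}"
    proof (rule permutes_superset[OF wp0])
      fix x assume "x \<in> {1..i} - {1..m}"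
      then have "x = i" unfolding i_def by auto
      then show "w x = x" using wi by simp
    qed
    have "permutation v" using vp permutation_permutes by blast
    moreover have "permutation r'" using r'p permutation_permutes by blast
    ultimately have we: "evenperm w" using H r'e unfolding w_def by (simp add: evenperm_comp)
    obtain vs where vs: "\<forall>i\<in>{3..m}. vs i \<in> R_set i" "w = ord_prod vs 3 m"
      using step(3) wp we by blast
    define vs' where "vs' = vs(Suc m := r)"
    have "ord_prod vs' 3 m = ord_prod vs 3 m" unfolding vs'_def
      by (rule ord_prod_cong) auto
    then have "ord_prod vs' 3 (Suc m) = w \<circ> r"
      using ord_prod_Suc[OF step(1)] vs(2) unfolding vs'_def by simp
    also have "\<dots> = v" unfolding w_def by (simp add: comp_assoc rr)
    finally have "v = ord_prod vs' 3 (Suc m)" by simp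
    moreover have "\<forall>i\<in>{3..Suc m}. vs' i \<in> R_set i"
      using vs(1) rR unfolding vs'_def i_def by (auto simp: le_Suc_eq)
    ultimately show "\<exists>vs. (\<forall>i\<in>{3..Suc m}. vs i \<in> R_set i) \<and> v = ord_prod vs 3 (Suc m)"
      by blast
  qed
qed

theorem theorem4p2:
  fixes n :: nat and v :: "nat \<Rightarrow> nat"
  assumes "n \<ge> 3" and "v \<in> alt_grp n"
  shows "(\<exists>vs. (\<forall>i\<in>{3..n}. vs i \<in> R_set i) \<and> v = ord_prod vs 3 n)
    \<and> (\<forall>vs ws. (\<forall>i\<in>{3..n}. vs i \<in> R_set i) \<and> v = ord_prod vs 3 n
               \<and> (\<forall>i\<in>{3..n}. ws i \<in> R_set i) \<and> v = ord_prod ws 3 n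
               \<longrightarrow> (\<forall>i\<in>{3..n}. vs i = ws i))"
proof
  have n2: "n \<ge> 2" using assms(1) by simp
  show "\<exists>vs. (\<forall>i\<in>{3..n}. vs i \<in> R_set i) \<and> v = ord_prod vs 3 n"
    using exist[OF n2] assms(2) unfolding alt_grp_def by blast
  show "\<forall>vs ws. (\<forall>i\<in>{3..n}. vs i \<in> R_set i) \<and> v = ord_prod vs 3 n
               \<and> (\<forall>i\<in>{3..n}. ws i \<in> R_set i) \<and> v = ord_prod ws 3 n
               \<longrightarrow> (\<forall>i\<in>{3..n}. vs i = ws i)"
    using uniq[OF n2] by metis
qed

end
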